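(* Let $v=\sum_{\alpha\in\{0,1\}^n}f_\alpha\omega_\alpha\in\mathcal P^\omega_n$ with $f_\alpha\in\mathcal P_n$. Then $v\in\Lambda^\omega_n$ if and only if for every $i=1,\dots,n-1$ and every $\alpha\in\{0,1\}^n$: $$\partial_i(f_\alpha)=\begin{cases}0 & \alpha\notin J_i,\\ f_{s_i(\alpha)} & \alpha\in J_i.\end{cases}$$
   Context: Let $\mathcal P_n=\mathbb Q[x_1,\dots,x_n]$ and $\mathcal P^\omega_n=\mathcal P_n\otimes\bigwedge[\omega_1,\dots,\omega_n]$ ($\omega_i$ odd, commuting with the $x_j$). $S_n$ acts on $\mathcal P^\omega_n$ by ring automorphisms via $s_i(x_j)=x_{s_i(j)}$, $s_i(\omega_j)=\omega_j+\delta_{ij}(x_j-x_{j+1})\omega_{j+1}$; $\Lambda^\omega_n=(\mathcal P^\omega_n)^{S_n}$. On $\mathcal P_n$, $\partial_i=(1-s_i)/(x_i-x_{i+1})$ is the usual divided difference. For $\alpha\in\{0,1\}^n$, $\omega_\alpha=\omega_1^{\alpha_1}\cdots\omega_n^{\alpha_n}$; $s_i(\alpha)$ is $\alpha$ with entries $i,i+1$ swapped; $J_i=\{\alpha:\alpha_i=0,\alpha_{i+1}=1\}$. *)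

theory Defs
  imports Complex_Main "HOL-Library.Poly_Mapping"
begin

type_synonym qpoly = "(nat \<Rightarrow>\<^sub>0 nat) \<Rightarrow>\<^sub>0 rat"

definition var :: "nat \<Rightarrow> qpoly" where
  "var j = Poly_Mapping.single (Poly_Mapping.single j 1) 1"

definition in_Pn :: "nat \<Rightarrow> qpoly \<Rightarrow> bool" where
  "in_Pn n f \<longleftrightarrow> (\<forall>m \<in> Poly_Mapping.keys f. Poly_Mapping.keys m \<subseteq> {1..n})"

definition sidx :: "nat \<Rightarrow> nat \<Rightarrow> nat" where
  "sidx i k = (if k = i then Suc i else if k = Suc i then i else k)"

definition smono :: "nat \<Rightarrow> (nat \<Rightarrow>\<^sub>0 nat) \<Rightarrow> (nat \<Rightarrow>\<^sub>0 nat)" where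
  "smono i m = Abs_poly_mapping (\<lambda>k. Poly_Mapping.lookup m (sidx i k))"

definition spoly :: "nat \<Rightarrow> qpoly \<Rightarrow> qpoly" where
  "spoly i f = Abs_poly_mapping (\<lambda>m. Poly_Mapping.lookup f (smono i m))"

text \<open>Divided difference: \<partial>_i f = (f - s_i f)/(x_i - x_{i+1}), the (unique) exact quotient.\<close>
definition ddiff :: "nat \<Rightarrow> qpoly \<Rightarrow> qpoly" where
  "ddiff i f = (THE g. (var i - var (Suc i)) * g = f - spoly i f)"

text \<open>An element is represented by its coefficient function: the coefficient of
  \<omega>_\<alpha> = \<omega>_{a_1}...\<omega>_{a_k} (a_1 < ... < a_k, \<alpha> = {a_1,...,a_k}) is u \<alpha>.
  The multi-index \<alpha> \<in> {0,1}^n is identified with the set {j. \<alpha>_j = 1} \<subseteq> {1..n}.\<close>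

type_synonym sqpoly = "nat set \<Rightarrow> qpoly"

definition szero :: sqpoly where "szero = (\<lambda>A. 0)"
definition sone :: sqpoly where "sone = (\<lambda>A. if A = {} then 1 else 0)"
definition sconst :: "qpoly \<Rightarrow> sqpoly" where "sconst p = (\<lambda>A. if A = {} then p else 0)"
definition omega :: "nat \<Rightarrow> sqpoly" where "omega j = (\<lambda>A. if A = {j} then 1 else 0)"

definition sadd :: "sqpoly \<Rightarrow> sqpoly \<Rightarrow> sqpoly" where
  "sadd u v = (\<lambda>A. u A + v A)"

definition ssum :: "'a set \<Rightarrow> ('a \<Rightarrow> sqpoly) \<Rightarrow> sqpoly" where
  "ssum S F = (\<lambda>A. \<Sum>a\<in>S. F a A)"

text \<open>Sign of the shuffle bringing \<omega>_A \<omega>_B (A, B disjoint) into increasing order.\<close>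
definition shuffle_sign :: "nat set \<Rightarrow> nat set \<Rightarrow> qpoly" where
  "shuffle_sign A B = (-1) ^ card {(a, b). a \<in> A \<and> b \<in> B \<and> b < a}"

text \<open>Product in P_n \<otimes> \<Lambda>[\<omega>] (the \<omega>_i odd, commuting with the x_j).\<close>
definition smult :: "sqpoly \<Rightarrow> sqpoly \<Rightarrow> sqpoly" where
  "smult u v = (\<lambda>C. \<Sum>A\<in>Pow C. shuffle_sign A (C - A) * u A * v (C - A))"

definition sprod_ord :: "nat set \<Rightarrow> (nat \<Rightarrow> sqpoly) \<Rightarrow> sqpoly" where
  "sprod_ord \<alpha> F = foldr (\<lambda>j acc. smult (F j) acc) (sorted_list_of_set \<alpha>) sone"

definition omega_mon :: "nat set \<Rightarrow> sqpoly" where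
  "omega_mon \<alpha> = sprod_ord \<alpha> omega"

definition superpoly :: "nat \<Rightarrow> (nat set \<Rightarrow> qpoly) \<Rightarrow> sqpoly" where
  "superpoly n f = ssum (Pow {1..n}) (\<lambda>\<alpha>. smult (sconst (f \<alpha>)) (omega_mon \<alpha>))"

definition somega :: "nat \<Rightarrow> nat \<Rightarrow> sqpoly" where
  "somega i j = (if j = i then sadd (omega j) (smult (sconst (var j - var (Suc j))) (omega (Suc j)))
                 else omega j)"

text \<open>s_i acting on P^\<omega>_n as the ring automorphism determined by its values on the
  generators x_j and \<omega>_j:  s_i(\<Sum> f_\<alpha> \<omega>_\<alpha>) = \<Sum> s_i(f_\<alpha>) s_i(\<omega>_{a_1}) ... s_i(\<omega>_{a_k}).\<close>
definition sact :: "nat \<Rightarrow> nat \<Rightarrow> sqpoly \<Rightarrow> sqpoly" where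
  "sact n i v = ssum (Pow {1..n})
     (\<lambda>\<alpha>. smult (sconst (spoly i (v \<alpha>))) (sprod_ord \<alpha> (somega i)))"

text \<open>\<Lambda>^\<omega>_n: invariants of S_n, i.e. of its generators s_1,...,s_{n-1}.\<close>
definition in_Lambda :: "nat \<Rightarrow> sqpoly \<Rightarrow> bool" where
  "in_Lambda n v \<longleftrightarrow> (\<forall>i. 1 \<le> i \<and> i < n \<longrightarrow> sact n i v = v)"

definition Jset :: "nat \<Rightarrow> nat set set" where
  "Jset i = {\<alpha>. i \<notin> \<alpha> \<and> Suc i \<in> \<alpha>}"

definition sset :: "nat \<Rightarrow> nat set \<Rightarrow> nat set" where
  "sset i \<alpha> = sidx i ` \<alpha>"

end

theory Submission imports Defs begin

lemma sidx_sidx[simp]: "sidx i (sidx i k) = k"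
  by (auto simp: sidx_def)

lemma lookup_smono: "Poly_Mapping.lookup (smono i m) k = Poly_Mapping.lookup m (sidx i k)"
proof -
  have "{k. Poly_Mapping.lookup m (sidx i k) \<noteq> 0} \<subseteq> sidx i ` Poly_Mapping.keys m"
    by (auto simp: in_keys_iff intro!: image_eqI[where x="sidx i _"])
  then have "finite {k. Poly_Mapping.lookup m (sidx i k) \<noteq> 0}"
    by (rule finite_subset) simp
  then show ?thesis by (simp add: smono_def)
qed

lemma smono_smono[simp]: "smono i (smono i m) = m"
  by (rule poly_mapping_eqI) (simp add: lookup_smono)

lemma lookup_spoly: "Poly_Mapping.lookup (spoly i f) m = Poly_Mapping.lookup f (smono i m)"
proof -
  have "{m. Poly_Mapping.lookup f (smono i m) \<noteq> 0} \<subseteq> smono i ` Poly_Mapping.keys f"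
    by (auto simp: in_keys_iff intro!: image_eqI[where x="smono i _"])
  then have "finite {m. Poly_Mapping.lookup f (smono i m) \<noteq> 0}"
    by (rule finite_subset) simp
  then show ?thesis by (simp add: spoly_def)
qed

lemma var_pow: "var i ^ a = Poly_Mapping.single (Poly_Mapping.single i a) 1"
  by (induction a) (simp_all add: var_def mult_single single_add[symmetric] add.commute)

lemma dvd_swap:
  fixes X Y :: "'a::comm_ring_1"
  shows "(X - Y) dvd (X^a * Y^b - X^b * Y^a)"
proof -
  have e: "X^a * Y^b - X^b * Y^a = Y^b * (X^a - Y^a) - Y^a * (X^b - Y^b)"
    by (simp add: algebra_simps)
  have d1: "(X - Y) dvd (X^a - Y^a)" by (simp add: power_diff_sumr2)
  have d2: "(X - Y) dvd (X^b - Y^b)" by (simp add: power_diff_sumr2)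
  show ?thesis unfolding e
    by (intro dvd_diff) (simp_all add: d1 d2 dvd_mult)
qed

lemma mono_split:
  fixes m :: "nat \<Rightarrow>\<^sub>0 nat" and i :: nat
  defines "r \<equiv> Abs_poly_mapping (\<lambda>k. if k = i \<or> k = Suc i then 0 else Poly_Mapping.lookup m k)"
  shows "m = r + Poly_Mapping.single i (Poly_Mapping.lookup m i) + Poly_Mapping.single (Suc i) (Poly_Mapping.lookup m (Suc i))"
    and "smono i m = r + Poly_Mapping.single i (Poly_Mapping.lookup m (Suc i)) + Poly_Mapping.single (Suc i) (Poly_Mapping.lookup m i)"
proof -
  have fin: "finite {k. (if k = i \<or> k = Suc i then 0 else Poly_Mapping.lookup m k) \<noteq> 0}"
    by (rule finite_subset[of _ "Poly_Mapping.keys m"]) (auto simp: in_keys_iff)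
  have lr: "Poly_Mapping.lookup r k = (if k = i \<or> k = Suc i then 0 else Poly_Mapping.lookup m k)" for k
    using fin by (simp add: r_def)
  show "m = r + Poly_Mapping.single i (Poly_Mapping.lookup m i) + Poly_Mapping.single (Suc i) (Poly_Mapping.lookup m (Suc i))"
    by (rule poly_mapping_eqI) (auto simp: lookup_add lr lookup_single when_def)
  show "smono i m = r + Poly_Mapping.single i (Poly_Mapping.lookup m (Suc i)) + Poly_Mapping.single (Suc i) (Poly_Mapping.lookup m i)"
    by (rule poly_mapping_eqI) (auto simp: lookup_add lr lookup_single when_def lookup_smono sidx_def)
qed

lemma mono_dvd: "(var i - var (Suc i)) dvd (Poly_Mapping.single m c - Poly_Mapping.single (smono i m) c :: qpoly)"
proof -
  obtain r where r1: "m = r + Poly_Mapping.single i (Poly_Mapping.lookup m i) + Poly_Mapping.single (Suc i) (Poly_Mapping.lookup m (Suc i))"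
    and r2: "smono i m = r + Poly_Mapping.single i (Poly_Mapping.lookup m (Suc i)) + Poly_Mapping.single (Suc i) (Poly_Mapping.lookup m i)"
    using mono_split by blast
  have sm: "Poly_Mapping.single (r + Poly_Mapping.single i a + Poly_Mapping.single (Suc i) b) c
      = (Poly_Mapping.single r c :: qpoly) * (var i ^ a * var (Suc i) ^ b)" for a b
    by (simp add: var_pow mult_single add.assoc)
  have "Poly_Mapping.single m c - Poly_Mapping.single (smono i m) c
     = (Poly_Mapping.single r c :: qpoly) * (var i ^ Poly_Mapping.lookup m i * var (Suc i) ^ Poly_Mapping.lookup m (Suc i)
           - var i ^ Poly_Mapping.lookup m (Suc i) * var (Suc i) ^ Poly_Mapping.lookup m i)"
    apply (subst (1) r1, subst r2)
    by (simp only: sm right_diff_distrib)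
  then show ?thesis by (simp add: dvd_swap)
qed

lemma poly_expand: "(f::qpoly) = (\<Sum>m\<in>Poly_Mapping.keys f. Poly_Mapping.single m (Poly_Mapping.lookup f m))"
  by (rule poly_mapping_eqI) (simp add: lookup_sum lookup_single when_def in_keys_iff)

lemma spoly_expand: "spoly i (f::qpoly) = (\<Sum>m\<in>Poly_Mapping.keys f. Poly_Mapping.single (smono i m) (Poly_Mapping.lookup f m))"
proof (rule poly_mapping_eqI)
  fix k
  have "(\<Sum>m\<in>Poly_Mapping.keys f. Poly_Mapping.lookup (Poly_Mapping.single (smono i m) (Poly_Mapping.lookup f m)) k)
      = (\<Sum>m\<in>Poly_Mapping.keys f. if m = smono i k then Poly_Mapping.lookup f m else 0)"
    by (rule sum.cong) (auto simp: lookup_single when_def)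
  also have "\<dots> = Poly_Mapping.lookup f (smono i k)"
    by (simp add: in_keys_iff)
  finally show "Poly_Mapping.lookup (spoly i f) k = Poly_Mapping.lookup (\<Sum>m\<in>Poly_Mapping.keys f. Poly_Mapping.single (smono i m) (Poly_Mapping.lookup f m)) k"
    by (simp add: lookup_spoly lookup_sum)
qed

lemma quot_exists: "(var i - var (Suc i)) dvd (f - spoly i f)"
proof -
  have "f - spoly i f = (\<Sum>m\<in>Poly_Mapping.keys f. Poly_Mapping.single m (Poly_Mapping.lookup f m) - Poly_Mapping.single (smono i m) (Poly_Mapping.lookup f m))"
    by (subst (1) poly_expand, subst spoly_expand) (simp add: sum_subtractf)
  then show ?thesis by (simp add: dvd_sum mono_dvd)
qed

lemma delta_nz: "var i - var (Suc i) \<noteq> (0::qpoly)"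
proof
  assume "var i - var (Suc i) = (0::qpoly)"
  then have "Poly_Mapping.lookup (var i - var (Suc i)) (Poly_Mapping.single i 1) = 0" by simp
  moreover have "Poly_Mapping.single (Suc i) (1::nat) \<noteq> Poly_Mapping.single i 1"
    by (metis lookup_single_eq lookup_single_not_eq n_not_Suc_n one_neq_zero)
  ultimately show False by (simp add: var_def lookup_minus lookup_single when_def)
qed

lemma ddiff_iff: "ddiff i f = g \<longleftrightarrow> (var i - var (Suc i)) * g = f - spoly i f"
proof -
  obtain g0 where g0: "f - spoly i f = (var i - var (Suc i)) * g0"
    using quot_exists by (meson dvdE)
  have u: "h = g0" if "(var i - var (Suc i)) * h = f - spoly i f" for h
    using g0 delta_nz that by simp
  have "ddiff i f = g0" unfolding ddiff_def
    apply (rule the_equality)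
     apply (simp add: g0)
    by (rule u)
  then show ?thesis using u g0 by metis
qed


lemma mem_sset: "x \<in> sset i X \<longleftrightarrow> sidx i x \<in> X"
  unfolding sset_def by (metis image_iff sidx_sidx)

lemma sset_sset[simp]: "sset i (sset i X) = X"
  by (auto simp: mem_sset)

lemma finite_sset[simp]: "finite (sset i X) = finite X"
  unfolding sset_def by (metis finite_imageI sset_def sset_sset)

lemma shuffle_empty[simp]: "shuffle_sign {} C = 1"
  by (simp add: shuffle_sign_def)

lemma shuffle_single_gt: "\<forall>b\<in>D. k < b \<Longrightarrow> shuffle_sign {k} D = 1"
proof -
  assume a: "\<forall>b\<in>D. k < b"
  have "{(a, b). a \<in> {k} \<and> b \<in> D \<and> b < a} = {}" using a by auto
  then show ?thesis by (simp only: shuffle_sign_def card.empty power_0)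
qed

lemma smult_sconst: "smult (sconst p) u C = (if finite C then p * u C else 0)"
proof (cases "finite C")
  case True
  have "smult (sconst p) u C = (\<Sum>A\<in>Pow C. if A = {} then p * u C else 0)"
    unfolding smult_def sconst_def by (rule sum.cong) auto
  also have "\<dots> = p * u C" using True sum.delta[of "Pow C" "{}" "\<lambda>_. p * u C"] by simp
  finally show ?thesis using True by simp
next
  case False
  then show ?thesis by (simp add: smult_def)
qed

lemma smult_singl:
  assumes "\<forall>A. u A \<noteq> 0 \<longrightarrow> (\<exists>k. A = {k})"
  shows "smult u R C = (if finite C then (\<Sum>k\<in>C. shuffle_sign {k} (C - {k}) * u {k} * R (C - {k})) else 0)"
proof (cases "finite C")
  case True
  let ?g = "\<lambda>A. shuffle_sign A (C - A) * u A * R (C - A)"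
  have "smult u R C = sum ?g (Pow C)" by (simp add: smult_def)
  also have "\<dots> = sum ?g ((\<lambda>k. {k}) ` C)"
  proof (rule sum.mono_neutral_right)
    show "finite (Pow C)" using True by simp
    show "(\<lambda>k. {k}) ` C \<subseteq> Pow C" by auto
    show "\<forall>A\<in>Pow C - (\<lambda>k. {k}) ` C. ?g A = 0"
    proof
      fix A assume A: "A \<in> Pow C - (\<lambda>k. {k}) ` C"
      have "u A = 0"
      proof (rule ccontr)
        assume "u A \<noteq> 0"
        then obtain k where "A = {k}" using assms by blast
        then show False using A by auto
      qed
      then show "?g A = 0" by simp
    qed
  qed
  also have "\<dots> = (\<Sum>k\<in>C. ?g {k})"
    by (subst sum.reindex) (auto simp: inj_on_def)
  finally show ?thesis using True by simp
next
  case False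
  then show ?thesis by (simp add: smult_def)
qed

definition Fd :: "qpoly \<Rightarrow> nat \<Rightarrow> nat \<Rightarrow> sqpoly" where
  "Fd d i j = (\<lambda>A. if A = {j} then 1 else if A = {Suc j} \<and> j = i then d else 0)"

definition Pv :: "qpoly \<Rightarrow> nat \<Rightarrow> nat set \<Rightarrow> sqpoly" where
  "Pv d i \<alpha> = (\<lambda>C. if C = \<alpha> then 1 else if i \<in> \<alpha> \<and> Suc i \<notin> \<alpha> \<and> C = sset i \<alpha> then d else 0)"

lemma step_T1:
  assumes S: "finite S" "\<forall>s\<in>S. j < s"
  shows "(if j \<in> C then shuffle_sign {j} (C - {j}) * Pv d i S (C - {j}) else 0)
       = (if C = insert j S then 1 else if i \<in> S \<and> Suc i \<notin> S \<and> C = insert j (sset i S) then d else 0)"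
proof (cases "j \<in> C")
  case True
  have jS: "j \<notin> S" using S by auto
  have e1: "C - {j} = S \<longleftrightarrow> C = insert j S" using True jS by auto
  have js: "\<forall>b\<in>sset i S. j < b" if "i \<in> S" "Suc i \<notin> S"
  proof
    fix b assume "b \<in> sset i S"
    then have "sidx i b \<in> S" by (simp add: mem_sset)
    then have "j < sidx i b" using S by auto
    moreover have "b \<noteq> i" using \<open>sidx i b \<in> S\<close> that by (auto simp: sidx_def)
    moreover have "j < i" using S that by auto
    ultimately show "j < b" by (auto simp: sidx_def split: if_splits)
  qed
  have e2: "i \<in> S \<Longrightarrow> Suc i \<notin> S \<Longrightarrow> C - {j} = sset i S \<longleftrightarrow> C = insert j (sset i S)"
    using True js by auto
  show ?thesis
  proof (cases "C = insert j S")
    case True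
    then have "C - {j} = S" using jS by auto
    then show ?thesis using True S shuffle_single_gt[of S j] by (simp add: Pv_def)
  next
    case False
    then show ?thesis using e1 e2 js \<open>j \<in> C\<close> shuffle_single_gt[of "sset i S" j]
      by (auto simp: Pv_def)
  qed
next
  case False
  then show ?thesis by auto
qed

lemma step_T2:
  assumes S: "finite S" "\<forall>s\<in>S. i < s"
  shows "(if Suc i \<in> C then shuffle_sign {Suc i} (C - {Suc i}) * d * Pv d i S (C - {Suc i}) else 0)
       = (if Suc i \<notin> S \<and> C = insert (Suc i) S then d else 0)"
proof (cases "Suc i \<in> C \<and> Suc i \<notin> S \<and> C = insert (Suc i) S")
  case True
  then have "C - {Suc i} = S" by auto
  moreover have "\<forall>b\<in>S. Suc i < b" using S True by (metis Suc_lessI)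
  ultimately show ?thesis using True shuffle_single_gt[of S "Suc i"] by (simp add: Pv_def)
next
  case False
  have "i \<notin> S" using S by auto
  then show ?thesis using False by (auto simp: Pv_def)
qed

lemma step:
  assumes S: "finite S" "\<forall>s\<in>S. j < s"
  shows "smult (Fd d i j) (Pv d i S) C = Pv d i (insert j S) C"
proof (cases "finite C")
  case False
  then have "C \<noteq> insert j S" "C \<noteq> sset i (insert j S)" using S by auto
  then show ?thesis using False
    by (subst smult_singl) (auto simp: Fd_def Pv_def)
next
  case True
  let ?R = "Pv d i S"
  have "smult (Fd d i j) ?R C = (\<Sum>k\<in>C. shuffle_sign {k} (C - {k}) * Fd d i j {k} * ?R (C - {k}))"
    using True by (subst smult_singl) (auto simp: Fd_def)
  also have "\<dots> = (\<Sum>k\<in>C. (if k = j then shuffle_sign {j} (C - {j}) * ?R (C - {j}) else 0)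
                   + (if k = Suc i \<and> j = i then shuffle_sign {Suc i} (C - {Suc i}) * d * ?R (C - {Suc i}) else 0))"
    by (rule sum.cong) (auto simp: Fd_def)
  also have "\<dots> = (if j \<in> C then shuffle_sign {j} (C - {j}) * ?R (C - {j}) else 0)
     + (if j = i then (if Suc i \<in> C then shuffle_sign {Suc i} (C - {Suc i}) * d * ?R (C - {Suc i}) else 0) else 0)"
    unfolding sum.distrib using True by (cases "j = i") (simp_all only: sum.delta simp_thms if_True if_False sum.neutral_const)
  also have "\<dots> = Pv d i (insert j S) C"
  proof (cases "j = i")
    case True
    have iS: "i \<notin> S" using S True by auto
    have "sset i (insert i S) = insert (Suc i) S" if "Suc i \<notin> S"
      using iS that by (auto simp: mem_sset sidx_def split: if_splits)
    then show ?thesis using True step_T1[OF S, of C d i] step_T2[of S i C d] S iS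
      by (auto simp: Pv_def)
  next
    case False
    show ?thesis
    proof (cases "j = Suc i")
      case True
      have iS: "i \<notin> S" using S True by auto
      then show ?thesis using False True step_T1[OF S, of C d i] by (auto simp: Pv_def)
    next
      case False2: False
      have "sset i (insert j S) = insert j (sset i S)"
        using False False2 by (auto simp: mem_sset sidx_def)
      then show ?thesis using False False2 step_T1[OF S, of C d i] by (auto simp: Pv_def)
    qed
  qed
  finally show ?thesis .
qed


lemma foldr_Fd: "sorted_wrt (<) xs \<Longrightarrow> foldr (\<lambda>j acc. smult (Fd d i j) acc) xs sone = Pv d i (set xs)"
proof (induction xs)
  case Nil
  show ?case by (auto simp: fun_eq_iff sone_def Pv_def)
next
  case (Cons j ys)
  then have IH: "foldr (\<lambda>j acc. smult (Fd d i j) acc) ys sone = Pv d i (set ys)" by simp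
  have gt: "\<forall>s\<in>set ys. j < s" using Cons.prems by simp
  show ?case using step[OF _ gt] by (simp add: IH fun_eq_iff del: foldr.simps) (simp add: IH)
qed

lemma sprod_Fd: "finite \<alpha> \<Longrightarrow> sprod_ord \<alpha> (Fd d i) = Pv d i \<alpha>"
  unfolding sprod_ord_def by (simp add: foldr_Fd)

lemma omega_Fd: "omega = Fd 0 0"
  by (auto simp: fun_eq_iff omega_def Fd_def)

lemma somega_Fd: "somega i = Fd (var i - var (Suc i)) i"
proof -
  have "smult (sconst (var i - var (Suc i))) (omega (Suc i)) A = (if A = {Suc i} then var i - var (Suc i) else 0)" for A
    by (auto simp: smult_sconst omega_def)
  then show ?thesis
    by (auto simp: fun_eq_iff somega_def Fd_def sadd_def omega_def)
qed

lemma omega_mon_val: "finite \<alpha> \<Longrightarrow> omega_mon \<alpha> C = (if C = \<alpha> then 1 else 0)"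
  by (simp add: omega_mon_def omega_Fd sprod_Fd Pv_def)

lemma superpoly_val: "superpoly n f C = (if C \<subseteq> {1..n} then f C else 0)"
proof (cases "finite C")
  case True
  have fin: "\<alpha> \<in> Pow {1..n} \<Longrightarrow> finite \<alpha>" for \<alpha> by (meson PowD finite_atLeastAtMost finite_subset)
  have "superpoly n f C = (\<Sum>\<alpha>\<in>Pow {1..n}. if \<alpha> = C then f \<alpha> else 0)"
    unfolding superpoly_def ssum_def
    by (rule sum.cong) (auto simp: smult_sconst True omega_mon_val fin)
  also have "\<dots> = (if C \<subseteq> {1..n} then f C else 0)" by simp
  finally show ?thesis .
next
  case False
  then have "\<not> C \<subseteq> {1..n}" using finite_subset by blast
  then show ?thesis using False by (simp add: superpoly_def ssum_def smult_sconst)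
qed

lemma cond_iff: "(i \<in> \<alpha> \<and> Suc i \<notin> \<alpha> \<and> C = sset i \<alpha>) \<longleftrightarrow> (C \<in> Jset i \<and> \<alpha> = sset i C)"
proof
  assume a: "i \<in> \<alpha> \<and> Suc i \<notin> \<alpha> \<and> C = sset i \<alpha>"
  then have "\<alpha> = sset i C" by simp
  moreover have "C \<in> Jset i" using a by (auto simp: Jset_def mem_sset sidx_def)
  ultimately show "C \<in> Jset i \<and> \<alpha> = sset i C" by simp
next
  assume a: "C \<in> Jset i \<and> \<alpha> = sset i C"
  then show "i \<in> \<alpha> \<and> Suc i \<notin> \<alpha> \<and> C = sset i \<alpha>" by (auto simp: Jset_def mem_sset sidx_def)
qed

lemma sset_range: "1 \<le> i \<Longrightarrow> i < n \<Longrightarrow> (sset i C \<subseteq> {1..n}) \<longleftrightarrow> C \<subseteq> {1..n}"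
proof -
  assume i: "1 \<le> i" "i < n"
  have r: "x \<in> {1..n} \<longleftrightarrow> sidx i x \<in> {1..n}" for x using i by (auto simp: sidx_def)
  have "sset i C \<subseteq> {1..n}" if "C \<subseteq> {1..n}" for C
    using that r by (auto simp: mem_sset)
  then show ?thesis by (metis sset_sset)
qed

lemma sact_val:
  assumes i: "1 \<le> i" "i < n"
  shows "sact n i v C = (if C \<subseteq> {1..n} then spoly i (v C) +
     (if C \<in> Jset i then (var i - var (Suc i)) * spoly i (v (sset i C)) else 0) else 0)"
proof (cases "finite C")
  case True
  let ?D = "var i - var (Suc i)"
  have fin: "\<alpha> \<in> Pow {1..n} \<Longrightarrow> finite \<alpha>" for \<alpha> by (meson PowD finite_atLeastAtMost finite_subset)
  have ne: "C \<in> Jset i \<Longrightarrow> sset i C \<noteq> C" by (auto simp: Jset_def mem_sset sidx_def)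
  have "sact n i v C = (\<Sum>\<alpha>\<in>Pow {1..n}. (if \<alpha> = C then spoly i (v \<alpha>) else 0)
        + (if C \<in> Jset i then (if \<alpha> = sset i C then ?D * spoly i (v \<alpha>) else 0) else 0))"
    unfolding sact_def ssum_def
  proof (rule sum.cong)
    fix \<alpha> assume "\<alpha> \<in> Pow {1..n}"
    then have "finite \<alpha>" by (rule fin)
    then show "smult (sconst (spoly i (v \<alpha>))) (sprod_ord \<alpha> (somega i)) C =
      (if \<alpha> = C then spoly i (v \<alpha>) else 0) + (if C \<in> Jset i then (if \<alpha> = sset i C then ?D * spoly i (v \<alpha>) else 0) else 0)"
      using True ne cond_iff[of i \<alpha> C]
      by (auto simp: smult_sconst somega_Fd sprod_Fd Pv_def)
  qed simp
  also have "\<dots> = (if C \<subseteq> {1..n} then spoly i (v C) else 0) +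
      (if C \<in> Jset i then (if sset i C \<subseteq> {1..n} then ?D * spoly i (v (sset i C)) else 0) else 0)"
    by (simp add: sum.distrib)
  also have "\<dots> = (if C \<subseteq> {1..n} then spoly i (v C) +
     (if C \<in> Jset i then ?D * spoly i (v (sset i C)) else 0) else 0)"
    using sset_range[OF i, of C] by auto
  finally show ?thesis .
next
  case False
  then have "\<not> C \<subseteq> {1..n}" using finite_subset by blast
  then show ?thesis using False by (simp add: sact_def ssum_def smult_sconst)
qed


lemma key:
  fixes g :: "nat set \<Rightarrow> qpoly" and P :: "nat set set"
  assumes cl: "\<And>\<alpha>. \<alpha> \<in> P \<Longrightarrow> \<alpha> \<in> Jset i \<Longrightarrow> sset i \<alpha> \<in> P"
  shows "(\<forall>\<alpha>\<in>P. spoly i (g \<alpha>) + (if \<alpha> \<in> Jset i then (var i - var (Suc i)) * spoly i (g (sset i \<alpha>)) else 0) = g \<alpha>)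
     \<longleftrightarrow> (\<forall>\<alpha>\<in>P. ddiff i (g \<alpha>) = (if \<alpha> \<in> Jset i then g (sset i \<alpha>) else 0))"
proof -
  let ?D = "var i - var (Suc i)"
  have nJ: "\<alpha> \<in> Jset i \<Longrightarrow> sset i \<alpha> \<notin> Jset i" for \<alpha> by (auto simp: Jset_def mem_sset sidx_def)
  show ?thesis
  proof
    assume H: "\<forall>\<alpha>\<in>P. spoly i (g \<alpha>) + (if \<alpha> \<in> Jset i then ?D * spoly i (g (sset i \<alpha>)) else 0) = g \<alpha>"
    show "\<forall>\<alpha>\<in>P. ddiff i (g \<alpha>) = (if \<alpha> \<in> Jset i then g (sset i \<alpha>) else 0)"
    proof
      fix \<alpha> assume a: "\<alpha> \<in> P"
      show "ddiff i (g \<alpha>) = (if \<alpha> \<in> Jset i then g (sset i \<alpha>) else 0)"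
      proof (cases "\<alpha> \<in> Jset i")
        case True
        have "spoly i (g (sset i \<alpha>)) = g (sset i \<alpha>)"
          using bspec[OF H cl[OF a True]] nJ[OF True] by simp
        moreover have "spoly i (g \<alpha>) + ?D * spoly i (g (sset i \<alpha>)) = g \<alpha>" using bspec[OF H a] True by simp
        ultimately show ?thesis using True by (simp add: ddiff_iff algebra_simps)
      next
        case False
        then show ?thesis using bspec[OF H a] by (simp add: ddiff_iff)
      qed
    qed
  next
    assume H: "\<forall>\<alpha>\<in>P. ddiff i (g \<alpha>) = (if \<alpha> \<in> Jset i then g (sset i \<alpha>) else 0)"
    show "\<forall>\<alpha>\<in>P. spoly i (g \<alpha>) + (if \<alpha> \<in> Jset i then ?D * spoly i (g (sset i \<alpha>)) else 0) = g \<alpha>"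
    proof
      fix \<alpha> assume a: "\<alpha> \<in> P"
      show "spoly i (g \<alpha>) + (if \<alpha> \<in> Jset i then ?D * spoly i (g (sset i \<alpha>)) else 0) = g \<alpha>"
      proof (cases "\<alpha> \<in> Jset i")
        case True
        have "ddiff i (g (sset i \<alpha>)) = 0" using bspec[OF H cl[OF a True]] nJ[OF True] by simp
        then have s: "spoly i (g (sset i \<alpha>)) = g (sset i \<alpha>)" by (simp add: ddiff_iff)
        have "ddiff i (g \<alpha>) = g (sset i \<alpha>)" using H a True by simp
        then have "?D * g (sset i \<alpha>) = g \<alpha> - spoly i (g \<alpha>)" by (simp add: ddiff_iff)
        then show ?thesis using True s by (simp add: algebra_simps)
      next
        case False
        then have "ddiff i (g \<alpha>) = 0" using H a by simp
        then show ?thesis using False by (simp add: ddiff_iff)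
      qed
    qed
  qed
qed

theorem proposition3p2:
  fixes n :: nat and f :: "nat set \<Rightarrow> qpoly"
  assumes "\<forall>\<alpha>. in_Pn n (f \<alpha>)"
  shows "in_Lambda n (superpoly n f) \<longleftrightarrow>
    (\<forall>i. 1 \<le> i \<and> i < n \<longrightarrow> (\<forall>\<alpha> \<in> Pow {1..n}.
       ddiff i (f \<alpha>) = (if \<alpha> \<in> Jset i then f (sset i \<alpha>) else 0)))"
proof -
  have per_i: "sact n i (superpoly n f) = superpoly n f \<longleftrightarrow>
     (\<forall>\<alpha> \<in> Pow {1..n}. ddiff i (f \<alpha>) = (if \<alpha> \<in> Jset i then f (sset i \<alpha>) else 0))"
    if i: "1 \<le> i" "i < n" for i
  proof -
    have "sact n i (superpoly n f) = superpoly n f \<longleftrightarrow>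
      (\<forall>\<alpha>\<in>Pow {1..n}. spoly i (f \<alpha>) + (if \<alpha> \<in> Jset i then (var i - var (Suc i)) * spoly i (f (sset i \<alpha>)) else 0) = f \<alpha>)"
      (is "?L \<longleftrightarrow> ?R")
    proof
      assume L: ?L
      show ?R
      proof
        fix \<alpha> assume a: "\<alpha> \<in> Pow {1..n}"
        have "sact n i (superpoly n f) \<alpha> = superpoly n f \<alpha>" using L by simp
        then show "spoly i (f \<alpha>) + (if \<alpha> \<in> Jset i then (var i - var (Suc i)) * spoly i (f (sset i \<alpha>)) else 0) = f \<alpha>"
        proof -
          have a': "\<alpha> \<subseteq> {1..n}" using a by simp
          have e1: "superpoly n f (sset i \<alpha>) = f (sset i \<alpha>)"
            using a' sset_range[OF i, of \<alpha>] superpoly_val[of n f "sset i \<alpha>"] by simp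
          have e2: "superpoly n f \<alpha> = f \<alpha>" using a' superpoly_val[of n f \<alpha>] by simp
          show ?thesis using \<open>sact n i (superpoly n f) \<alpha> = superpoly n f \<alpha>\<close>
            unfolding sact_val[OF i] e1 e2 using a' by simp
        qed
      qed
    next
      assume R: ?R
      show ?L
      proof
        fix C
        show "sact n i (superpoly n f) C = superpoly n f C"
        proof (cases "C \<subseteq> {1..n}")
          case True
          have e1: "superpoly n f (sset i C) = f (sset i C)"
            using True sset_range[OF i, of C] superpoly_val[of n f "sset i C"] by simp
          have e2: "superpoly n f C = f C" using True superpoly_val[of n f C] by simp
          have "C \<in> Pow {1..n}" using True by simp
          from bspec[OF R this] show ?thesis
            unfolding sact_val[OF i] e1 e2 using True by simp
        next
          case False
          then show ?thesis by (simp add: sact_val[OF i] superpoly_val)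
        qed
      qed
    qed
    also have "\<dots> \<longleftrightarrow> (\<forall>\<alpha> \<in> Pow {1..n}. ddiff i (f \<alpha>) = (if \<alpha> \<in> Jset i then f (sset i \<alpha>) else 0))"
      by (rule key) (use sset_range[OF i] in auto)
    finally show ?thesis .
  qed
  show ?thesis unfolding in_Lambda_def using per_i by auto
qed

end
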